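(* Let $n$, $k$, $t$ be positive integers with $k\geq t+1$ and $n\geq 2k$, and let $V$ be an $n$-dimensional vector space over $\mathbb{F}_q$. If $\mathcal{F}\subseteq{V\brack k}$ is an almost $t$-intersecting family with $\tau_t(\mathcal{F})\geq k+1$, then $|\mathcal{F}|\leq\binom{2k-2t+2}{k-t+1}$.
   Context: $q$ is a prime power; ${W\brack k}$ is the set of $k$-dimensional subspaces of $W$. A family $\mathcal{F}\subseteq{V\brack k}$ is almost $t$-intersecting if for each $F\in\mathcal{F}$ there is at most one $F'\in\mathcal{F}$ with $\dim(F\cap F')<t$. A subspace $W$ of $V$ is a $t$-cover of $\mathcal{F}$ if $\dim(W\cap F)\geq t$ for all $F\in\mathcal{F}$; the $t$-covering number $\tau_t(\mathcal{F})$ is the minimum dimension of a $t$-cover of $\mathcal{F}$. *)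

theory Defs
  imports "HOL-Analysis.Analysis"
begin

text \<open>The ambient space V is the n-dimensional space 'a^'n over a finite field 'a
  (so q = CARD('a) is a prime power and n = CARD('n)).\<close>

definition Gr :: "nat \<Rightarrow> ('a::{field,finite}^'n) set set" where
  "Gr k = {W. vec.subspace W \<and> vec.dim W = k}"

definition almost_t_intersecting :: "nat \<Rightarrow> ('a::{field,finite}^'n) set set \<Rightarrow> bool" where
  "almost_t_intersecting t \<F> \<longleftrightarrow>
     (\<forall>F\<in>\<F>. card {F'\<in>\<F>. vec.dim (F \<inter> F') < t} \<le> 1)"

definition t_cover :: "nat \<Rightarrow> ('a::{field,finite}^'n) set set \<Rightarrow> ('a^'n) set \<Rightarrow> bool" where
  "t_cover t \<F> W \<longleftrightarrow> vec.subspace W \<and> (\<forall>F\<in>\<F>. vec.dim (W \<inter> F) \<ge> t)"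

definition tau :: "nat \<Rightarrow> ('a::{field,finite}^'n) set set \<Rightarrow> nat" where
  "tau t \<F> = (LEAST d. \<exists>W. t_cover t \<F> W \<and> vec.dim W = d)"

end

theory Submission
  imports Defs "HOL-Computational_Algebra.Fraction_Field" "HOL-Computational_Algebra.Polynomial"
begin
lemma scale_inv_cancel: "(c::'K::field) \<noteq> 0 \<Longrightarrow> inverse c *s (c *s x) = (x::'K^'n)"
  by (simp add: vec_eq_iff)

lemma dim_le_N: "vec.dim (S :: ('K::field ^'n) set) \<le> CARD('n)"
  using vec.dim_subset_UNIV[of S] by (simp add: vec.dimension_def card_cart_basis)

lemma dim_N_UNIV: "vec.dim (S :: ('K::field ^'n) set) = CARD('n) \<Longrightarrow> vec.span S = UNIV"
  using vec.dim_eq_full[of S] by (simp add: vec.dimension_def card_cart_basis)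

lemma dim_UNIV_N: "vec.dim (UNIV :: ('K::field ^'n) set) = CARD('n)"
  by (simp add: card_cart_basis)

lemma dimUN:
  fixes A B :: "('K::field ^'n) set"
  shows "vec.dim (A \<union> B) + vec.dim (vec.span A \<inter> vec.span B) = vec.dim A + vec.dim B"
proof -
  have "vec.dim {x + y |x y. x \<in> vec.span A \<and> y \<in> vec.span B} + vec.dim (vec.span A \<inter> vec.span B)
        = vec.dim (vec.span A) + vec.dim (vec.span B)"
    by (rule vec.dim_sums_Int) auto
  moreover have "{x + y |x y. x \<in> vec.span A \<and> y \<in> vec.span B} = vec.span (A \<union> B)"
    by (simp add: vec.span_Un)
  ultimately show ?thesis by simp
qed

lemma dim_inter_ge:
  fixes S T :: "('K::field ^'n) set"
  assumes "vec.subspace S" "vec.subspace T"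
  shows "vec.dim S + vec.dim T \<le> vec.dim (S \<inter> T) + CARD('n)"
proof -
  have e: "vec.span S = S" "vec.span T = T" using assms by (simp_all add: vec.span_eq_iff)
  show ?thesis using dimUN[of S T] dim_le_N[of "S \<union> T"] unfolding e by linarith
qed

lemma avoid:
  fixes SS :: "('K::field ^'n) set set"
  assumes inf: "infinite (UNIV::'K set)" and fin: "finite SS"
    and sub: "\<forall>S\<in>SS. vec.subspace S \<and> S \<noteq> UNIV"
  shows "\<exists>v. \<forall>S\<in>SS. v \<notin> S"
  using fin sub
proof (induction SS rule: finite_induct)
  case empty
  then show ?case by simp
next
  case (insert S SS)
  then obtain a where a: "\<forall>T\<in>SS. a \<notin> T" by auto
  have subS: "vec.subspace S" and SU: "S \<noteq> UNIV" using insert.prems by auto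
  show ?case
  proof (cases "a \<in> S")
    case False
    then show ?thesis using a by blast
  next
    case True
    obtain b where b: "b \<notin> S" using SU by blast
    have finT: "finite {c. a + c *s b \<in> T}" if T: "T \<in> SS" for T
    proof -
      have subT: "vec.subspace T" using T insert.prems by auto
      have eq: "c1 = c2" if "a + c1 *s b \<in> T" "a + c2 *s b \<in> T" for c1 c2
      proof (rule ccontr)
        assume ne: "c1 \<noteq> c2"
        have "(a + c1 *s b) - (a + c2 *s b) \<in> T" using that subT vec.subspace_diff by blast
        hence "(c1 - c2) *s b \<in> T" by (simp add: vec.scale_left_diff_distrib algebra_simps)
        hence "inverse (c1 - c2) *s ((c1 - c2) *s b) \<in> T" using subT vec.subspace_scale by blast
        moreover have "inverse (c1 - c2) *s ((c1 - c2) *s b) = b" proof -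
          have "c1 - c2 \<noteq> 0" using ne by simp
          then show ?thesis by (rule scale_inv_cancel)
        qed
        ultimately have bT: "b \<in> T" by simp
        hence "c1 *s b \<in> T" using subT vec.subspace_scale by blast
        hence "(a + c1 *s b) - c1 *s b \<in> T" using that(1) subT vec.subspace_diff by blast
        thus False using a T by simp
      qed
      show ?thesis
      proof (cases "{c. a + c *s b \<in> T} = {}")
        case True then show ?thesis by simp
      next
        case False
        then obtain c0 where "a + c0 *s b \<in> T" by blast
        then have "{c. a + c *s b \<in> T} \<subseteq> {c0}" using eq by blast
        then show ?thesis using finite_subset by blast
      qed
    qed
    have "finite (insert 0 (\<Union>T\<in>SS. {c. a + c *s b \<in> T}))"
      using finT insert.hyps(1) by auto
    from ex_new_if_finite[OF inf this]
    obtain c where c: "c \<notin> insert 0 (\<Union>T\<in>SS. {c. a + c *s b \<in> T})" ..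
    have "a + c *s b \<notin> S"
    proof
      assume "a + c *s b \<in> S"
      hence "(a + c *s b) - a \<in> S" using True subS vec.subspace_diff by blast
      hence "c *s b \<in> S" by simp
      hence "inverse c *s (c *s b) \<in> S" by (rule vec.subspace_scale[OF subS])
      moreover have "c \<noteq> 0" using c by blast
      ultimately show False using b scale_inv_cancel by metis
    qed
    moreover have "\<forall>T\<in>SS. a + c *s b \<notin> T" using c by blast
    ultimately show ?thesis by blast
  qed
qed

lemma gp:
  fixes UU :: "('K::field ^'n) set set"
  assumes inf: "infinite (UNIV::'K set)" and fin: "finite UU" and sub: "\<forall>U\<in>UU. vec.subspace U"
    and r: "r \<le> CARD('n)"
  shows "\<exists>L. vec.subspace L \<and> vec.dim L = CARD('n) - r \<and> (\<forall>U\<in>UU. vec.dim (U \<inter> L) \<le> vec.dim U - r)"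
proof -
  let ?N = "CARD('n)"
  have "\<forall>j. j \<le> ?N - r \<longrightarrow> (\<exists>L. vec.subspace L \<and> vec.dim L = j \<and> (\<forall>U\<in>UU. vec.dim (U \<inter> L) \<le> vec.dim U + j - ?N))"
  proof (intro allI impI)
    fix j assume "j \<le> ?N - r"
    then show "\<exists>L. vec.subspace L \<and> vec.dim L = j \<and> (\<forall>U\<in>UU. vec.dim (U \<inter> L) \<le> vec.dim U + j - ?N)"
    proof (induction j)
      case 0
      have z: "vec.dim (U \<inter> {0}) = 0" for U :: "('K ^'n) set" by auto
      show ?case by (intro exI[of _ "{0}"]) (auto simp: vec.subspace_0 z)
    next
      case (Suc j)
      then obtain L where L: "vec.subspace L" "vec.dim L = j" "\<forall>U\<in>UU. vec.dim (U \<inter> L) \<le> vec.dim U + j - ?N"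
        by auto
      have LU: "L \<noteq> UNIV" using L(2) Suc.prems dim_UNIV_N[where 'K='K and 'n='n] by auto
      let ?SS = "insert L ((\<lambda>U. vec.span (U \<union> L)) ` {U\<in>UU. vec.span (U \<union> L) \<noteq> UNIV})"
      have "\<exists>v. \<forall>S\<in>?SS. v \<notin> S"
        by (rule avoid[OF inf]) (use fin LU L(1) in auto)
      then obtain v where vv: "\<forall>S\<in>?SS. v \<notin> S" ..
      have v: "v \<notin> L" "\<And>U. U \<in> UU \<Longrightarrow> vec.span (U \<union> L) \<noteq> UNIV \<Longrightarrow> v \<notin> vec.span (U \<union> L)"
      proof -
        show "v \<notin> L" using vv by simp
        fix U assume "U \<in> UU" "vec.span (U \<union> L) \<noteq> UNIV"
        then have "vec.span (U \<union> L) \<in> ?SS" by blast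
        then show "v \<notin> vec.span (U \<union> L)" using vv by blast
      qed
      define L' where "L' = vec.span (insert v L)"
      have L'sub: "vec.subspace L'" unfolding L'_def by simp
      have spL: "vec.span L = L" using L(1) by (simp add: vec.span_eq_iff)
      have dimL': "vec.dim L' = Suc j"
      proof -
        have nv: "v \<notin> vec.span L" by (metis spL v(1))
        have "vec.dim L' = vec.dim (insert v L)" unfolding L'_def by (rule vec.dim_span)
        also have "\<dots> = vec.dim L + 1" unfolding vec.dim_insert by (simp only: if_not_P[OF nv])
        finally show ?thesis using L(2) by simp
      qed
      have "vec.dim (U \<inter> L') \<le> vec.dim U + Suc j - ?N" if U: "U \<in> UU" for U
      proof (cases "vec.span (U \<union> L) = UNIV")
        case False
        have "U \<inter> L' \<subseteq> L"
        proof
          fix x assume x: "x \<in> U \<inter> L'"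
          then obtain k where k: "x - k *s v \<in> L"
            unfolding L'_def vec.span_insert spL by blast
          have "k = 0"
          proof (rule ccontr)
            assume k0: "k \<noteq> 0"
            have "x \<in> vec.span (U \<union> L)" using x by (auto intro: vec.span_base)
            moreover have "x - k *s v \<in> vec.span (U \<union> L)" using k by (auto intro: vec.span_base)
            ultimately have "x - (x - k *s v) \<in> vec.span (U \<union> L)" by (rule vec.span_diff)
            hence "k *s v \<in> vec.span (U \<union> L)" by simp
            hence "inverse k *s (k *s v) \<in> vec.span (U \<union> L)" by (rule vec.span_scale)
            moreover have "inverse k *s (k *s v) = v" using k0 by (rule scale_inv_cancel)
            ultimately have "v \<in> vec.span (U \<union> L)" by (simp only:)
            then show False using v(2)[OF U False] by blast
          qed
          then show "x \<in> L" using k by simp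
        qed
        moreover have "U \<inter> L \<subseteq> U \<inter> L'" unfolding L'_def by (auto intro: vec.span_base)
        ultimately have "U \<inter> L' = U \<inter> L" by blast
        then show ?thesis using L(3) U by fastforce
      next
        case True
        have sU: "vec.span U = U" using sub U by (simp add: vec.span_eq_iff)
        have sL': "vec.span L' = L'" using L'sub by (simp add: vec.span_eq_iff)
        have "vec.span (U \<union> L) \<subseteq> vec.span (U \<union> L')"
          by (rule vec.span_mono) (auto simp: L'_def intro: vec.span_base)
        hence "vec.span (U \<union> L') = UNIV" using True by auto
        hence "vec.dim (U \<union> L') = ?N"
          by (metis dim_UNIV_N vec.dim_span)
        then show ?thesis using dimUN[of U L'] sU sL' dimL' by simp
      qed
      then show ?case using L'sub dimL' by blast
    qed
  qed
  from this[rule_format, of "?N - r"] obtain L where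
    "vec.subspace L" "vec.dim L = ?N - r" "\<forall>U\<in>UU. vec.dim (U \<inter> L) \<le> vec.dim U + (?N - r) - ?N"
    by auto
  moreover have "vec.dim U + (?N - r) - ?N = vec.dim U - r" for U :: "('K^'n) set" using r by simp
  ultimately show ?thesis by auto
qed

definition sig :: "'n set \<Rightarrow> 'n set \<Rightarrow> 'n \<Rightarrow> 'n" where
  "sig A S = (SOME f. bij_betw f A S)"

lemma sig_bij: "finite A \<Longrightarrow> finite S \<Longrightarrow> card A = card S \<Longrightarrow> bij_betw (sig A S) A S"
  unfolding sig_def using finite_same_card_bij[of A S] by (metis someI_ex)

lemma key:
  fixes h :: "('n::finite \<Rightarrow> 'K::field^'n) \<Rightarrow> 'K" and IY J :: "'n set" and u :: "'n \<Rightarrow> 'K^'n"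
    and L :: "('K^'n) set" and s :: nat
  assumes cardIY: "card IY = s"
   and H1: "\<And>y y'. (\<And>c. c \<in> IY \<Longrightarrow> y c = y' c) \<Longrightarrow> h y = h y'"
   and H2: "\<And>y c a b. c \<in> IY \<Longrightarrow> h (y(c := a + b)) = h (y(c := a)) + h (y(c := b))"
   and H3: "\<And>y c \<alpha> a. c \<in> IY \<Longrightarrow> h (y(c := \<alpha> *s a)) = \<alpha> * h (y(c := a))"
   and H4: "\<And>y c a l. c \<in> IY \<Longrightarrow> l \<in> L \<Longrightarrow> h (y(c := a + l)) = h (y(c := a))"
   and H5: "\<And>y c c'. c \<in> IY \<Longrightarrow> c' \<in> IY \<Longrightarrow> c \<noteq> c' \<Longrightarrow> y c = y c' \<Longrightarrow> h y = 0"
   and H6: "\<And>y p. p permutes IY \<Longrightarrow> h (y \<circ> p) = of_int (sign p) * h y"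
   and H7: "\<And>S. S \<subseteq> J \<Longrightarrow> card S = s \<Longrightarrow> h (u \<circ> sig IY S) = 0"
   and sp: "\<And>x. \<exists>\<alpha> l. l \<in> L \<and> x = (\<Sum>j\<in>J. \<alpha> j *s u j) + l"
  shows "h y = 0"
proof -
  have sum: "h (y(c := \<Sum>j\<in>A. f j)) = (\<Sum>j\<in>A. h (y(c := f j)))"
    if c: "c \<in> IY" and A: "finite A" for y c A and f :: "'n \<Rightarrow> 'K^'n"
    using A
  proof (induction A rule: finite_induct)
    case empty
    have "h (y(c := (0::'K) *s 0)) = 0 * h (y(c := 0))" by (rule H3[OF c])
    then have "h (y(c := 0)) = 0" by simp
    then show ?case by (simp only: sum.empty)
  next
    case (insert x F)
    have "h (y(c := sum f (insert x F))) = h (y(c := f x + sum f F))"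
      by (simp only: sum.insert[OF insert.hyps])
    also have "\<dots> = h (y(c := f x)) + h (y(c := sum f F))" by (rule H2[OF c])
    also have "\<dots> = h (y(c := f x)) + (\<Sum>j\<in>F. h (y(c := f j)))" using insert.IH by (simp only:)
    also have "\<dots> = (\<Sum>j\<in>insert x F. h (y(c := f j)))" by (simp only: sum.insert[OF insert.hyps])
    finally show ?case .
  qed
  have base: "h y = 0" if y: "\<forall>c\<in>IY. y c \<in> u ` J" for y
  proof -
    from y have "\<forall>c\<in>IY. \<exists>j. j \<in> J \<and> y c = u j" by blast
    then obtain i where i: "\<And>c. c \<in> IY \<Longrightarrow> i c \<in> J \<and> y c = u (i c)" by metis
    show ?thesis
    proof (cases "inj_on i IY")
      case False
      then obtain c c' where "c \<in> IY" "c' \<in> IY" "c \<noteq> c'" "i c = i c'"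
        unfolding inj_on_def by blast
      then show ?thesis using H5[of c c' y] i by metis
    next
      case True
      define S where "S = i ` IY"
      have SJ: "S \<subseteq> J" using i S_def by blast
      have cS: "card S = s" using True cardIY S_def card_image by blast
      define \<sigma> where "\<sigma> = sig IY S"
      have bs: "bij_betw \<sigma> IY S" unfolding \<sigma>_def
        by (rule sig_bij) (use cS cardIY in auto)
      define p where "p = (\<lambda>c. if c \<in> IY then inv_into IY \<sigma> (i c) else c)"
      have bi: "bij_betw i IY S" using True S_def by (simp add: bij_betw_def)
      have "bij_betw (inv_into IY \<sigma> \<circ> i) IY IY"
        using bij_betw_trans[OF bi bij_betw_inv_into[OF bs]] .
      moreover have "\<And>c. c \<in> IY \<Longrightarrow> (inv_into IY \<sigma> \<circ> i) c = p c" by (simp add: p_def)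
      ultimately have "bij_betw p IY IY" using bij_betw_cong by (metis (mono_tags, lifting))
      hence pp: "p permutes IY" by (rule bij_imp_permutes) (simp add: p_def)
      have eq: "((u \<circ> \<sigma>) \<circ> p) c = y c" if c: "c \<in> IY" for c
      proof -
        have "i c \<in> \<sigma> ` IY" using bs c S_def bij_betw_imp_surj_on by blast
        then have "\<sigma> (p c) = i c" using c by (simp add: p_def f_inv_into_f)
        then show ?thesis using i[OF c] by simp
      qed
      have "h y = h ((u \<circ> \<sigma>) \<circ> p)" by (rule H1) (rule eq[symmetric])
      also have "\<dots> = of_int (sign p) * h (u \<circ> \<sigma>)" by (rule H6[OF pp])
      also have "h (u \<circ> \<sigma>) = 0" unfolding \<sigma>_def by (rule H7[OF SJ cS])
      finally show ?thesis by simp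
    qed
  qed
  have main: "\<forall>y. (\<forall>c\<in>IY - D. y c \<in> u ` J) \<longrightarrow> h y = 0" if "finite D" for D
    using that
  proof (induction D rule: finite_induct)
    case empty
    then show ?case using base by simp
  next
    case (insert c D)
    show ?case
    proof (intro allI impI)
      fix y assume y: "\<forall>c'\<in>IY - insert c D. y c' \<in> u ` J"
      show "h y = 0"
      proof (cases "c \<in> IY")
        case False
        then have "IY - insert c D = IY - D" by blast
        then show ?thesis using insert.IH y by simp
      next
        case True
        obtain \<alpha> l where al: "l \<in> L" "y c = (\<Sum>j\<in>J. \<alpha> j *s u j) + l" using sp by blast
        have "h y = h (y(c := (\<Sum>j\<in>J. \<alpha> j *s u j) + l))" using al(2) by (metis fun_upd_triv)
        also have "\<dots> = h (y(c := (\<Sum>j\<in>J. \<alpha> j *s u j)))" by (rule H4[OF True al(1)])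
        also have "\<dots> = (\<Sum>j\<in>J. h (y(c := \<alpha> j *s u j)))" by (rule sum[OF True]) simp
        also have "\<dots> = (\<Sum>j\<in>J. \<alpha> j * h (y(c := u j)))" using H3[OF True] by simp
        also have "\<dots> = 0"
        proof (rule sum.neutral, rule ballI)
          fix j assume j: "j \<in> J"
          have "\<forall>c'\<in>IY - D. (y(c := u j)) c' \<in> u ` J" using y j by auto
          then have "h (y(c := u j)) = 0" using insert.IH by blast
          then show "\<alpha> j * h (y(c := u j)) = 0" by simp
        qed
        finally show ?thesis .
      qed
    qed
  qed
  show ?thesis using main[of UNIV] by simp
qed

definition Mf :: "'n set \<Rightarrow> 'n set \<Rightarrow> ('n \<Rightarrow> 'v) \<Rightarrow> ('n \<Rightarrow> 'v) \<Rightarrow> ('n \<Rightarrow> 'v) \<Rightarrow> 'n \<Rightarrow> 'v" where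
  "Mf IA IY A Lr y r = (if r \<in> IA then A r else if r \<in> IY then y r else Lr r)"

definition Gd :: "'n set \<Rightarrow> 'n set \<Rightarrow> ('n::finite \<Rightarrow> 'K::field^'n) \<Rightarrow> ('n \<Rightarrow> 'K^'n) \<Rightarrow> ('n \<Rightarrow> 'K^'n) \<Rightarrow> 'K" where
  "Gd IA IY A Lr y = det (\<chi> r. Mf IA IY A Lr y r)"

lemma row_lambda[simp]: "row i (\<chi> r. f r) = f i"
  by (simp add: row_def vec_lambda_eta)

lemma Mf_upd: "c \<in> IY \<Longrightarrow> c \<notin> IA \<Longrightarrow>
  Mf IA IY A Lr (y(c:=v)) = (\<lambda>r. if r = c then v else Mf IA IY A Lr y r)"
  by (auto simp: Mf_def fun_eq_iff)

context
  fixes IA IY :: "'n::finite set" and A Lr :: "'n \<Rightarrow> 'K::field^'n"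
  assumes disj: "IA \<inter> IY = {}"
begin

lemma G1: "(\<And>c. c \<in> IY \<Longrightarrow> y c = y' c) \<Longrightarrow> Gd IA IY A Lr y = Gd IA IY A Lr y'"
  unfolding Gd_def Mf_def by (rule arg_cong[where f=det]) (simp add: vec_eq_iff)

lemma G2:
  assumes c: "c \<in> IY"
  shows "Gd IA IY A Lr (y(c := a + b)) = Gd IA IY A Lr (y(c := a)) + Gd IA IY A Lr (y(c := b))"
proof -
  have cA: "c \<notin> IA" using c disj by blast
  show ?thesis unfolding Gd_def Mf_upd[OF c cA]
    using det_row_add[of c "\<lambda>_. a" "\<lambda>_. b" "Mf IA IY A Lr y"] by simp
qed

lemma G3:
  assumes c: "c \<in> IY"
  shows "Gd IA IY A Lr (y(c := \<alpha> *s a)) = \<alpha> * Gd IA IY A Lr (y(c := a))"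
proof -
  have cA: "c \<notin> IA" using c disj by blast
  show ?thesis unfolding Gd_def Mf_upd[OF c cA]
    using det_row_mul[of c \<alpha> "\<lambda>_. a" "Mf IA IY A Lr y"] by simp
qed

lemma G4:
  assumes c: "c \<in> IY" and l: "l \<in> vec.span (Lr ` (- (IA \<union> IY)))"
  shows "Gd IA IY A Lr (y(c := a + l)) = Gd IA IY A Lr (y(c := a))"
proof -
  have cA: "c \<notin> IA" using c disj by blast
  define Am where "Am = (\<chi> r. Mf IA IY A Lr (y(c:=a)) r)"
  have "Lr ` (- (IA \<union> IY)) \<subseteq> {row j Am |j. j \<noteq> c}"
  proof
    fix x assume "x \<in> Lr ` (- (IA \<union> IY))"
    then obtain r where r: "r \<notin> IA" "r \<notin> IY" "x = Lr r" by blast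
    then have "x = row r Am" "r \<noteq> c" using c by (auto simp: Am_def Mf_def)
    then show "x \<in> {row j Am |j. j \<noteq> c}" by blast
  qed
  then have "l \<in> vec.span {row j Am |j. j \<noteq> c}" using l vec.span_mono by blast
  from det_row_span[OF this]
  have "det (\<chi> k. if k = c then row c Am + l else row k Am) = det Am" .
  moreover have "(\<chi> k. if k = c then row c Am + l else row k Am) = (\<chi> r. Mf IA IY A Lr (y(c := a + l)) r)"
    using c cA by (simp add: Am_def Mf_upd vec_eq_iff)
  ultimately show ?thesis unfolding Gd_def Am_def by simp
qed

lemma G5: "c \<in> IY \<Longrightarrow> c' \<in> IY \<Longrightarrow> c \<noteq> c' \<Longrightarrow> y c = y c' \<Longrightarrow> Gd IA IY A Lr y = 0"
  unfolding Gd_def using disj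
  by (intro det_identical_rows[of c c']) (auto simp: Mf_def)

lemma G6:
  assumes p: "p permutes IY"
  shows "Gd IA IY A Lr (y \<circ> p) = of_int (sign p) * Gd IA IY A Lr y"
proof -
  have pU: "p permutes UNIV" using permutes_subset[OF p] by blast
  have "(\<chi> r. Mf IA IY A Lr (y \<circ> p) r) = (\<chi> r. (\<chi> r. Mf IA IY A Lr y r) $ p r)"
  proof -
    have "Mf IA IY A Lr (y \<circ> p) r = Mf IA IY A Lr y (p r)" for r
    proof (cases "r \<in> IY")
      case True
      then have "p r \<in> IY" using permutes_in_image[OF p] by blast
      then show ?thesis using True disj by (auto simp: Mf_def)
    next
      case False
      then show ?thesis using permutes_not_in[OF p False] by (simp add: Mf_def)
    qed
    then show ?thesis by simp
  qed
  then show ?thesis unfolding Gd_def by (simp only:) (rule det_permute_rows[OF pU])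
qed

end

lemma span_Un_spans: "vec.span (A \<union> B) = vec.span (vec.span A \<union> vec.span B)"
  by (simp add: vec.span_Un vec.span_span)

lemma count:
  fixes Q :: "'i \<Rightarrow> ('K::field^'n) set" and pt :: "'i \<Rightarrow> 'i" and I :: "'i set"
    and L :: "('K^'n) set" and s :: nat
  assumes finI: "finite I"
   and Qsub: "\<And>i. i\<in>I \<Longrightarrow> vec.subspace (Q i)" and Qdim: "\<And>i. i\<in>I \<Longrightarrow> vec.dim (Q i) = s"
   and pt: "\<And>i. i\<in>I \<Longrightarrow> pt i \<in> I"
   and part: "\<And>i. i\<in>I \<Longrightarrow> Q i \<inter> Q (pt i) = {0}"
   and Lsub: "vec.subspace L" and Ldim: "vec.dim L = CARD('n) - 2 * s"
   and Lpart: "\<And>i. i\<in>I \<Longrightarrow> vec.span (Q i \<union> Q (pt i)) \<inter> L = {0}"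
   and other: "\<And>i j. i\<in>I \<Longrightarrow> j\<in>I \<Longrightarrow> j \<noteq> pt i \<Longrightarrow> Q i \<inter> Q j \<noteq> {0}"
   and N: "2 * s \<le> CARD('n)"
  shows "card I \<le> (2 * s) choose s"
proof -
  let ?N = "CARD('n)"
  have ptinj: "i = j" if ij: "i \<in> I" "j \<in> I" "pt i = pt j" for i j
  proof -
    have "i = pt (pt i)" if i: "i \<in> I" for i
    proof (rule ccontr)
      assume "i \<noteq> pt (pt i)"
      then have "Q (pt i) \<inter> Q i \<noteq> {0}" by (rule other[OF pt[OF i] i])
      then show False using part[OF i] by (metis Int_commute)
    qed
    then show ?thesis using ij by metis
  qed
  obtain J :: "'n set" where J: "card J = 2 * s" using obtain_subset_with_card_n[of "2 * s" "UNIV::'n set"] N by auto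
  obtain IA where IA: "IA \<subseteq> J" "card IA = s" using obtain_subset_with_card_n[of s J] J by auto
  define IY where "IY = J - IA"
  have finJ: "finite J" by simp
  have cIY: "card IY = s" unfolding IY_def using IA J card_Diff_subset[of IA J] by (simp add: finite_subset)
  have disj: "IA \<inter> IY = {}" unfolding IY_def by blast
  have JU: "J = IA \<union> IY" unfolding IY_def using IA by blast
  define IL where "IL = - J"
  have cIL: "card IL = ?N - 2 * s" unfolding IL_def Compl_eq_Diff_UNIV using J card_Diff_subset[of J UNIV] by simp
  obtain BL where BL: "BL \<subseteq> L" "vec.independent BL" "L \<subseteq> vec.span BL" "card BL = vec.dim L"
    using vec.basis_exists by blast
  have spBL: "vec.span BL = L" using BL Lsub by (simp add: vec.span_minimal subset_antisym)
  obtain lb where lb: "bij_betw lb IL BL"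
    using finite_same_card_bij[of IL BL] cIL BL(4) Ldim vec.finiteI_independent[OF BL(2)] by auto
  obtain C where C: "BL \<subseteq> C" "vec.independent C" "UNIV \<subseteq> vec.span C"
    by (rule vec.maximal_independent_subset_extend[OF subset_UNIV BL(2)]) blast
  have finC: "finite C" using vec.finiteI_independent[OF C(2)] .
  have cC: "card C = ?N" using vec.basis_card_eq_dim[of C UNIV] C dim_UNIV_N by auto
  have cCB: "card (C - BL) = 2 * s" using card_Diff_subset[of BL C] C(1) cC BL(4) Ldim N finC
    by (simp add: finite_subset)
  obtain u where u: "bij_betw u J (C - BL)"
    using finite_same_card_bij[of J "C - BL"] J cCB finC by auto
  have sp: "\<exists>\<alpha> l. l \<in> L \<and> x = (\<Sum>j\<in>J. \<alpha> j *s u j) + l" for x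
  proof -
    have "(C - BL) \<union> BL = C" using C(1) by blast
    then have "x \<in> vec.span ((C - BL) \<union> BL)" using C(3) by auto
    then obtain a b where ab: "x = a + b" "a \<in> vec.span (C - BL)" "b \<in> vec.span BL"
      unfolding vec.span_Un by blast
    have "C - BL = u ` J" using bij_betw_imp_surj_on[OF u] by simp
    with ab(2) obtain c where "a = (\<Sum>v\<in>u ` J. c v *s v)"
      using vec.span_finite[of "u ` J"] finJ by auto
    also have "\<dots> = (\<Sum>j\<in>J. c (u j) *s u j)"
      using sum.reindex[of u J "\<lambda>v. c v *s v"] u by (simp add: bij_betw_def)
    finally have aa: "a = (\<Sum>j\<in>J. c (u j) *s u j)" .
    show ?thesis using aa ab spBL by (intro exI[of _ "\<lambda>j. c (u j)"] exI[of _ b]) auto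
  qed

  have "\<forall>i\<in>I. \<exists>Bi. Bi \<subseteq> Q i \<and> vec.independent Bi \<and> Q i \<subseteq> vec.span Bi \<and> card Bi = s"
  proof
    fix i assume i: "i \<in> I"
    obtain Bi where "Bi \<subseteq> Q i" "vec.independent Bi" "Q i \<subseteq> vec.span Bi" "card Bi = vec.dim (Q i)"
      using vec.basis_exists by blast
    then show "\<exists>Bi. Bi \<subseteq> Q i \<and> vec.independent Bi \<and> Q i \<subseteq> vec.span Bi \<and> card Bi = s"
      using Qdim[OF i] by blast
  qed
  then obtain B where B: "\<And>i. i\<in>I \<Longrightarrow> B i \<subseteq> Q i \<and> vec.independent (B i) \<and> Q i \<subseteq> vec.span (B i) \<and> card (B i) = s"
    by metis
  have finB: "finite (B i)" if "i \<in> I" for i using B[OF that] vec.finiteI_independent by blast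
  have spB: "vec.span (B i) = Q i" if i: "i \<in> I" for i
    using B[OF i] Qsub[OF i] by (simp add: vec.span_minimal subset_antisym)
  have dimB: "vec.dim (B i) = s" if i: "i \<in> I" for i
    using B[OF i] vec.dim_eq_card_independent by metis
  have "\<forall>i\<in>I. \<exists>f. bij_betw f IA (B i)"
    using finite_same_card_bij[of IA] IA cIY finB B by (metis finite_subset finJ)
  then obtain a where a: "\<And>i. i\<in>I \<Longrightarrow> bij_betw (a i) IA (B i)" by metis
  have "\<forall>i\<in>I. \<exists>f. bij_betw f IY (B i)"
    using finite_same_card_bij[of IY] cIY finB B by (metis finite_subset finJ Diff_subset IY_def)
  then obtain b where b: "\<And>i. i\<in>I \<Longrightarrow> bij_betw (b i) IY (B i)" by metis
  define G where "G i y = Gd IA IY (a i) lb y" for i y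
  have detspan: "det A \<noteq> 0 \<longleftrightarrow> vec.span (rows A) = UNIV" for A :: "'K^'n^'n"
    using invertible_det_nz[of A] invertible_left_inverse[of A] matrix_left_invertible_span_rows_gen[of A]
    by simp
  have dimBL: "vec.dim BL = ?N - 2 * s" using BL Ldim vec.dim_eq_card_independent by metis
  have F1: "G i (b j) \<noteq> 0 \<longleftrightarrow> j = pt i" if i: "i \<in> I" and j: "j \<in> I" for i j
  proof -
    have rw: "rows (\<chi> r. Mf IA IY (a i) lb (b j) r) = B i \<union> B j \<union> BL"
    proof -
      have "rows (\<chi> r. Mf IA IY (a i) lb (b j) r) = a i ` IA \<union> b j ` IY \<union> lb ` IL"
        unfolding rows_def row_lambda using disj by (auto simp: Mf_def IL_def JU)
      then show ?thesis using a[OF i] b[OF j] lb by (simp add: bij_betw_def)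
    qed
    have d1: "vec.dim (B i \<union> B j) + vec.dim (Q i \<inter> Q j) = 2 * s"
      using dimUN[of "B i" "B j"] spB[OF i] spB[OF j] dimB[OF i] dimB[OF j] by simp
    have d2: "vec.dim (B i \<union> B j \<union> BL) + vec.dim (vec.span (Q i \<union> Q j) \<inter> L) = vec.dim (B i \<union> B j) + (?N - 2 * s)"
      using dimUN[of "B i \<union> B j" BL] spBL dimBL span_Un_spans[of "B i" "B j"] spB[OF i] spB[OF j] by simp
    show ?thesis
    proof
      assume G0: "G i (b j) \<noteq> 0"
      show "j = pt i"
      proof (rule ccontr)
        assume "j \<noteq> pt i"
        then have ne: "Q i \<inter> Q j \<noteq> {0}" using other i j by blast
        have "0 \<in> Q i \<inter> Q j" using Qsub i j vec.subspace_0 by blast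
        then have "\<not> (Q i \<inter> Q j \<subseteq> {0})" using ne by blast
        then have "vec.dim (Q i \<inter> Q j) \<noteq> 0" by simp
        then have "vec.dim (B i \<union> B j \<union> BL) < ?N" using d1 d2 N by linarith
        moreover have "vec.span (B i \<union> B j \<union> BL) = UNIV"
          using G0 detspan rw unfolding G_def Gd_def by metis
        then have "vec.dim (B i \<union> B j \<union> BL) = ?N" by (metis dim_UNIV_N vec.dim_span)
        ultimately show False by simp
      qed
    next
      assume jp: "j = pt i"
      then have "Q i \<inter> Q j = {0}" "vec.span (Q i \<union> Q j) \<inter> L = {0}" using part[OF i] Lpart[OF i] by auto
      then have "vec.dim (B i \<union> B j \<union> BL) = ?N" using d1 d2 N by simp
      then have "vec.span (B i \<union> B j \<union> BL) = UNIV" by (rule dim_N_UNIV)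
      then show "G i (b j) \<noteq> 0" using detspan rw unfolding G_def Gd_def by metis
    qed
  qed
  have ptinj': "pt i \<noteq> pt j" if "i \<in> I" "j \<in> I" "i \<noteq> j" for i j using ptinj that by blast
  define w where "w i = (\<chi> S::'n set. if S \<subseteq> J \<and> card S = s then G i (u \<circ> sig IY S) else 0)" for i
  have spL': "l \<in> vec.span (lb ` (- (IA \<union> IY)))" if "l \<in> L" for l
  proof -
    have "lb ` (- (IA \<union> IY)) = BL" using lb unfolding IL_def JU by (simp add: bij_betw_def)
    then show ?thesis using spBL that by simp
  qed
  have KC: "\<forall>i\<in>I. cf i = 0" if c0: "(\<Sum>i\<in>I. cf i *s w i) = 0" for cf
  proof -
    define h where "h y = (\<Sum>i\<in>I. cf i * G i y)" for y
    have h0: "h y = 0" for y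
    proof (rule key[where h=h and IY=IY and J=J and u=u and L=L and s=s])
      show "card IY = s" by (rule cIY)
      show "h y = h y'" if "\<And>c. c \<in> IY \<Longrightarrow> y c = y' c" for y y'
        unfolding h_def G_def by (simp add: G1[OF disj that])
      show "h (y(c := a + b)) = h (y(c := a)) + h (y(c := b))" if "c \<in> IY" for y c a b
        unfolding h_def G_def by (simp add: G2[OF disj that] sum.distrib distrib_left)
      show "h (y(c := \<alpha> *s a)) = \<alpha> * h (y(c := a))" if "c \<in> IY" for y c \<alpha> a
        unfolding h_def G_def by (simp add: G3[OF disj that] sum_distrib_left mult.left_commute)
      show "h (y(c := a + l)) = h (y(c := a))" if "c \<in> IY" "l \<in> L" for y c a l
        unfolding h_def G_def by (simp add: G4[OF disj that(1) spL'[OF that(2)]])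
      show "h y = 0" if "c \<in> IY" "c' \<in> IY" "c \<noteq> c'" "y c = y c'" for y c c'
        unfolding h_def G_def by (simp add: G5[OF disj that])
      show "h (y \<circ> p) = of_int (sign p) * h y" if "p permutes IY" for y p
        unfolding h_def G_def by (simp add: G6[OF disj that] sum_distrib_left mult.left_commute)
      show "h (u \<circ> sig IY S) = 0" if "S \<subseteq> J" "card S = s" for S
      proof -
        have "h (u \<circ> sig IY S) = (\<Sum>i\<in>I. cf i * (w i $ S))" unfolding h_def w_def using that by simp
        also have "\<dots> = (\<Sum>i\<in>I. cf i *s w i) $ S" by (simp add: sum_component)
        finally show ?thesis using c0 by simp
      qed
      show "\<exists>\<alpha> l. l \<in> L \<and> x = (\<Sum>j\<in>J. \<alpha> j *s u j) + l" for x by (rule sp)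
    qed
    show ?thesis
    proof
      fix m assume m: "m \<in> I"
      have "0 = h (b (pt m))" using h0 by simp
      also have "\<dots> = cf m * G m (b (pt m)) + (\<Sum>i\<in>I - {m}. cf i * G i (b (pt m)))"
        unfolding h_def using sum.remove[OF finI m] by simp
      also have "(\<Sum>i\<in>I - {m}. cf i * G i (b (pt m))) = 0"
      proof (rule sum.neutral, rule ballI)
        fix i assume i: "i \<in> I - {m}"
        then have "pt m \<noteq> pt i" using ptinj' m by blast
        then have "G i (b (pt m)) = 0" using F1[of i "pt m"] i pt[OF m] by blast
        then show "cf i * G i (b (pt m)) = 0" by simp
      qed
      finally have "cf m * G m (b (pt m)) = 0" by simp
      moreover have "G m (b (pt m)) \<noteq> 0" using F1[of m "pt m"] m pt[OF m] by blast
      ultimately show "cf m = 0" by simp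
    qed
  qed
  have winj: "inj_on w I"
  proof (rule inj_onI, rule ccontr)
    fix i j assume ij: "i \<in> I" "j \<in> I" "w i = w j" "i \<noteq> j"
    define c where "c x = (if x = i then 1 else if x = j then -1 else (0::'K))" for x
    have "c x *s w x = (if x = i then w i else 0) + (if x = j then - w j else 0)" for x
      using ij(4) by (simp add: c_def)
    then have "(\<Sum>x\<in>I. c x *s w x) = (\<Sum>x\<in>I. (if x = i then w i else 0)) + (\<Sum>x\<in>I. (if x = j then - w j else 0))"
      by (simp add: sum.distrib)
    also have "\<dots> = w i - w j" using ij(1,2) finI by (simp add: sum.delta)
    finally have "(\<Sum>x\<in>I. c x *s w x) = 0" using ij(3) by simp
    then have "c i = 0" using KC ij(1) by blast
    then show False by (simp add: c_def)
  qed
  have windep: "vec.independent (w ` I)"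
  proof
    assume "vec.dependent (w ` I)"
    then obtain c where c: "\<exists>v\<in>w ` I. c v \<noteq> 0" "(\<Sum>v\<in>w ` I. c v *s v) = 0"
      using vec.dependent_finite[of "w ` I"] finI by blast
    have "(\<Sum>i\<in>I. c (w i) *s w i) = 0" using c(2) sum.reindex[OF winj, of "\<lambda>v. c v *s v"] by simp
    then have "\<forall>i\<in>I. c (w i) = 0" using KC[of "\<lambda>i. c (w i)"] by blast
    then show False using c(1) by blast
  qed
  define T where "T = {S. S \<subseteq> J \<and> card S = s}"
  define V where "V = {v::'K^('n set). \<forall>S. S \<notin> T \<longrightarrow> v $ S = 0}"
  have wV: "w ` I \<subseteq> V" unfolding V_def T_def w_def by (auto split: if_split_asm)
  have VW: "V \<subseteq> vec.span ((\<lambda>S. axis S 1) ` T)"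
  proof
    fix v assume v: "v \<in> V"
    have "v = (\<Sum>S\<in>T. (v $ S) *s axis S 1)"
    proof (subst vec_eq_iff, rule allI)
      fix S'
      have "(\<Sum>S\<in>T. (v $ S) *s axis S (1::'K)) $ S' = (\<Sum>S\<in>T. v $ S * (axis S (1::'K) $ S'))"
        by (simp only: sum_component vector_smult_component)
      also have "\<dots> = (\<Sum>S\<in>T. (if S = S' then v $ S else 0))"
        by (rule sum.cong) (auto simp: axis_def)
      also have "\<dots> = v $ S'" using v unfolding V_def by (simp add: sum.delta' T_def) 
      finally show "v $ S' = (\<Sum>S\<in>T. (v $ S) *s axis S 1) $ S'" by simp
    qed
    also have "\<dots> \<in> vec.span ((\<lambda>S. axis S 1) ` T)"
      by (intro vec.span_sum vec.span_scale vec.span_base) auto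
    finally show "v \<in> vec.span ((\<lambda>S. axis S 1) ` T)" .
  qed
  have "card I = card (w ` I)" using card_image[OF winj] by simp
  also have "\<dots> \<le> vec.dim V" by (rule vec.independent_card_le_dim[OF wV windep])
  also have "\<dots> \<le> card ((\<lambda>S. axis S (1::'K)) ` T)" by (rule vec.dim_le_card[OF VW]) (simp add: T_def)
  also have "\<dots> \<le> card T" by (rule card_image_le) (simp add: T_def)
  also have "card T = (2 * s) choose s" unfolding T_def using n_subsets[of J s] J by simp
  finally show ?thesis .
qed

lemma core_K:
  fixes P :: "'i \<Rightarrow> ('K::field^'n) set" and pt :: "'i \<Rightarrow> 'i" and I :: "'i set" and k t :: nat
  assumes inf: "infinite (UNIV::'K set)" and finI: "finite I"
   and Psub: "\<And>i. i\<in>I \<Longrightarrow> vec.subspace (P i)" and Pdim: "\<And>i. i\<in>I \<Longrightarrow> vec.dim (P i) = k"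
   and pt: "\<And>i. i\<in>I \<Longrightarrow> pt i \<in> I"
   and small: "\<And>i. i\<in>I \<Longrightarrow> vec.dim (P i \<inter> P (pt i)) < t"
   and big: "\<And>i j. i\<in>I \<Longrightarrow> j\<in>I \<Longrightarrow> j \<noteq> pt i \<Longrightarrow> t \<le> vec.dim (P i \<inter> P j)"
   and t: "0 < t" "t \<le> k" and N: "2 * k \<le> CARD('n)"
  shows "card I \<le> (2 * (k-t+1)) choose (k-t+1)"
proof -
  let ?N = "CARD('n)"
  define s where "s = k - t + 1"
  let ?UU = "P ` I \<union> (\<lambda>i. P i \<inter> P (pt i)) ` I"
  have finUU: "finite ?UU" using finI by simp
  have UUsub: "\<forall>U\<in>?UU. vec.subspace U" using Psub pt by (auto intro: vec.subspace_inter)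
  have tN: "t - 1 \<le> ?N" using t N by linarith
  obtain W where W: "vec.subspace W" "vec.dim W = ?N - (t - 1)"
    "\<forall>U\<in>?UU. vec.dim (U \<inter> W) \<le> vec.dim U - (t - 1)"
    using gp[OF inf finUU UUsub tN] by blast
  define Q where "Q i = P i \<inter> W" for i
  have Qsub: "vec.subspace (Q i)" if "i \<in> I" for i
    unfolding Q_def using Psub[OF that] W(1) by (rule vec.subspace_inter)
  have Qdim: "vec.dim (Q i) = s" if i: "i \<in> I" for i
  proof -
    have "vec.dim (Q i) \<le> k - (t - 1)" using W(3) i Pdim[OF i] unfolding Q_def by fastforce
    moreover have "k + (?N - (t - 1)) \<le> vec.dim (Q i) + ?N"
      using dim_inter_ge[OF Psub[OF i] W(1)] Pdim[OF i] W(2) unfolding Q_def by simp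
    moreover have "?N - (t - 1) + (t - 1) = ?N" "k - (t - 1) + (t - 1) = k" "k - t + 1 = k - (t - 1)"
      using t N by auto
    ultimately show ?thesis unfolding s_def by linarith
  qed
  have part: "Q i \<inter> Q (pt i) = {0}" if i: "i \<in> I" for i
  proof -
    have "Q i \<inter> Q (pt i) = (P i \<inter> P (pt i)) \<inter> W" unfolding Q_def by blast
    moreover have "vec.dim ((P i \<inter> P (pt i)) \<inter> W) \<le> vec.dim (P i \<inter> P (pt i)) - (t - 1)"
      using W(3) i by blast
    ultimately have "vec.dim (Q i \<inter> Q (pt i)) = 0" using small[OF i] by simp
    then have "Q i \<inter> Q (pt i) \<subseteq> {0}" by simp
    moreover have "0 \<in> Q i \<inter> Q (pt i)" using Qsub i pt vec.subspace_0 by blast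
    ultimately show ?thesis by blast
  qed
  have other: "Q i \<inter> Q j \<noteq> {0}" if ij: "i \<in> I" "j \<in> I" "j \<noteq> pt i" for i j
  proof
    assume z: "Q i \<inter> Q j = {0}"
    have e: "Q i \<inter> Q j = (P i \<inter> P j) \<inter> W" unfolding Q_def by blast
    have "vec.dim (P i \<inter> P j) + vec.dim W \<le> vec.dim ((P i \<inter> P j) \<inter> W) + ?N"
      by (rule dim_inter_ge) (use Psub ij W(1) in \<open>auto intro: vec.subspace_inter\<close>)
    then show False using z e big[OF ij] W(2) t N by simp
  qed
  have "2 * (k - t + 1) \<le> 2 * k" using t by simp
  then have s2: "2 * s \<le> ?N" unfolding s_def using N by (rule order_trans)
  let ?VV = "(\<lambda>i. vec.span (Q i \<union> Q (pt i))) ` I"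
  obtain L where L: "vec.subspace L" "vec.dim L = ?N - 2 * s"
    "\<forall>U\<in>?VV. vec.dim (U \<inter> L) \<le> vec.dim U - 2 * s"
    using gp[OF inf _ _ s2, of ?VV] finI by auto
  have Lpart: "vec.span (Q i \<union> Q (pt i)) \<inter> L = {0}" if i: "i \<in> I" for i
  proof -
    have sq: "vec.span (Q j) = Q j" if "j \<in> I" for j using Qsub[OF that] by (simp add: vec.span_eq_iff)
    have "vec.dim (Q i \<union> Q (pt i)) + vec.dim (vec.span (Q i) \<inter> vec.span (Q (pt i))) = s + s"
      using dimUN[of "Q i" "Q (pt i)"] Qdim i pt by simp
    then have "vec.dim (Q i \<union> Q (pt i)) = 2 * s" using part[OF i] sq i pt by simp
    then have "vec.dim (vec.span (Q i \<union> Q (pt i)) \<inter> L) = 0" using L(3) i by fastforce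
    then have "vec.span (Q i \<union> Q (pt i)) \<inter> L \<subseteq> {0}" by simp
    moreover have "0 \<in> vec.span (Q i \<union> Q (pt i)) \<inter> L" using L(1) vec.subspace_0 vec.span_zero by blast
    ultimately show ?thesis by blast
  qed
  have "card I \<le> (2 * s) choose s"
    by (rule count[where Q=Q and I=I and pt=pt and L=L and s=s, OF finI Qsub Qdim pt part L(1) L(2) Lpart other s2])
  then show ?thesis unfolding s_def .
qed

definition emb :: "'a::field \<Rightarrow> 'a poly fract" where "emb c = Fract [:c:] 1"

lemma emb_add: "emb (a + b) = emb a + emb b" by (simp add: emb_def)
lemma emb_mult: "emb (a * b) = emb a * emb b" by (simp add: emb_def mult.commute)
lemma emb_0[simp]: "emb 0 = 0" by (simp add: emb_def Zero_fract_def)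
lemma emb_1[simp]: "emb 1 = 1" by (simp add: emb_def One_fract_def one_pCons)
lemma emb_neg: "emb (- a) = - emb a" by (simp add: emb_def)
lemma emb_inj: "emb a = emb b \<longleftrightarrow> a = b" by (simp add: emb_def eq_fract)

lemma inf_K: "infinite (UNIV :: 'a::field poly fract set)"
proof -
  have "inj (\<lambda>n::nat. Fract (monom (1::'a) n) 1)"
    by (rule injI) (simp add: eq_fract monom_eq_iff')
  then show ?thesis by (rule infinite_super[OF subset_UNIV range_inj_infinite])
qed

lemma emb_sum: "emb (sum f A) = (\<Sum>a\<in>A. emb (f a))"
  by (induction A rule: infinite_finite_induct) (simp_all add: emb_add)

lemma emb_prod: "emb (prod f A) = (\<Prod>a\<in>A. emb (f a))"
  by (induction A rule: infinite_finite_induct) (simp_all add: emb_mult)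

lemma emb_of_int_sign: "emb (of_int (sign p)) = of_int (sign p)"
  by (simp add: sign_def emb_neg)

lemma det_emb: "det (\<chi> i j. emb (A $ i $ j)) = emb (det (A :: 'a::field^'n^'n))"
  unfolding det_def by (simp add: emb_sum emb_mult emb_prod emb_of_int_sign)

definition embv :: "'a::field ^'n \<Rightarrow> 'a poly fract ^'n" where "embv v = (\<chi> i. emb (v $ i))"

lemma embv_add: "embv (x + y) = embv x + embv y" by (simp add: embv_def vec_eq_iff emb_add)
lemma embv_scale: "embv (c *s x) = emb c *s embv x" by (simp add: embv_def vec_eq_iff emb_mult)
lemma embv_0: "embv 0 = 0" by (simp add: embv_def vec_eq_iff)
lemma embv_sum: "embv (sum f A) = (\<Sum>a\<in>A. embv (f a))"
  by (induction A rule: infinite_finite_induct) (simp_all add: embv_0 embv_add)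
lemma embv_inj: "inj embv" by (rule injI) (simp add: embv_def vec_eq_iff emb_inj)

lemma detspan: "det A \<noteq> 0 \<longleftrightarrow> vec.span (rows A) = UNIV" for A :: "'K::field^'n^'n"
  using invertible_det_nz[of A] invertible_left_inverse[of A] matrix_left_invertible_span_rows_gen[of A]
  by simp

lemma embv_indep:
  assumes indB: "vec.independent (B :: ('a::field^'n) set)"
  shows "vec.independent (embv ` B)"
proof -
  obtain C where C: "B \<subseteq> C" "vec.independent C" "UNIV \<subseteq> vec.span C"
    by (rule vec.maximal_independent_subset_extend[OF subset_UNIV indB]) blast
  have finC: "finite C" using vec.finiteI_independent[OF C(2)] .
  have cC: "card C = CARD('n)" using vec.basis_card_eq_dim[of C UNIV] C dim_UNIV_N by auto
  obtain e where e: "bij_betw e (UNIV::'n set) C"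
    using finite_same_card_bij[of "UNIV::'n set" C] finC cC by auto
  define A where "A = (\<chi> i. e i)"
  have rA: "rows A = C" unfolding A_def rows_def row_lambda using bij_betw_imp_surj_on[OF e] by auto
  have "vec.span (rows A) = UNIV" using rA C(3) by auto
  then have detA: "det A \<noteq> 0" using detspan by blast
  define A' where "A' = (\<chi> i j. emb (A $ i $ j))"
  have "det A' = emb (det A)" unfolding A'_def by (rule det_emb)
  then have "det A' \<noteq> 0" using detA emb_inj[of "det A" 0] by simp
  then have sp: "vec.span (rows A') = UNIV" using detspan by blast
  have rowA': "row i A' = embv (e i)" for i
    unfolding A'_def A_def embv_def row_def by simp
  have rA': "rows A' = embv ` C"
  proof -
    have "rows A' = range (\<lambda>i. embv (e i))" unfolding rows_def rowA' by auto
    also have "\<dots> = embv ` C" using bij_betw_imp_surj_on[OF e] by auto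
    finally show ?thesis .
  qed
  have finE: "finite (embv ` C)" using finC by simp
  have c1: "card (embv ` C) \<le> CARD('n)" using card_image_le[OF finC, of embv] cC by simp
  have "vec.dim (UNIV :: ('a poly fract^'n) set) \<le> card (embv ` C)"
    by (rule vec.dim_le_card) (use sp rA' finE in auto)
  then have c2: "card (embv ` C) = vec.dim (UNIV :: ('a poly fract^'n) set)"
    using c1 dim_UNIV_N[where 'K="'a poly fract" and 'n='n] by simp
  have "vec.independent (embv ` C)"
    using vec.card_eq_dim[OF subset_UNIV c2 finE] sp rA' by simp
  then show ?thesis using C(1) vec.independent_mono by blast
qed

lemma dim_embv: "vec.dim (embv ` S) = vec.dim (S :: ('a::field^'n) set)"
proof -
  obtain B where B: "B \<subseteq> S" "vec.independent B" "S \<subseteq> vec.span B" "card B = vec.dim S"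
    using vec.basis_exists by blast
  have finB: "finite B" using vec.finiteI_independent[OF B(2)] .
  have "embv ` S \<subseteq> vec.span (embv ` B)"
  proof
    fix y assume "y \<in> embv ` S"
    then obtain x where x: "x \<in> S" "y = embv x" by blast
    then have "x \<in> vec.span B" using B(3) by blast
    then obtain c where "x = (\<Sum>b\<in>B. c b *s b)" using vec.span_finite[OF finB] by auto
    then have "y = (\<Sum>b\<in>B. emb (c b) *s embv b)" using x(2) by (simp add: embv_sum embv_scale)
    also have "\<dots> \<in> vec.span (embv ` B)"
      by (intro vec.span_sum vec.span_scale vec.span_base) auto
    finally show "y \<in> vec.span (embv ` B)" .
  qed
  then have "card (embv ` B) = vec.dim (embv ` S)"
    using vec.basis_card_eq_dim[of "embv ` B" "embv ` S"] B(1) embv_indep[OF B(2)] by blast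
  moreover have "card (embv ` B) = card B" by (rule card_image) (rule inj_on_subset[OF embv_inj subset_UNIV])
  ultimately show ?thesis using B(4) by simp
qed

lemma dim_embv_inter:
  fixes X Y :: "('a::field^'n) set"
  assumes X: "vec.subspace X" and Y: "vec.subspace Y"
  shows "vec.dim (vec.span (embv ` X) \<inter> vec.span (embv ` Y)) = vec.dim (X \<inter> Y)"
proof -
  have "vec.dim (embv ` X \<union> embv ` Y) + vec.dim (vec.span (embv ` X) \<inter> vec.span (embv ` Y))
        = vec.dim (embv ` X) + vec.dim (embv ` Y)" by (rule dimUN)
  then have 1: "vec.dim (X \<union> Y) + vec.dim (vec.span (embv ` X) \<inter> vec.span (embv ` Y)) = vec.dim X + vec.dim Y"
    unfolding image_Un[symmetric] dim_embv .
  have e: "vec.span X = X" "vec.span Y = Y" using X Y by (simp_all add: vec.span_eq_iff)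
  have 2: "vec.dim (X \<union> Y) + vec.dim (X \<inter> Y) = vec.dim X + vec.dim Y"
    using dimUN[of X Y] unfolding e .
  show ?thesis using 1 2 by linarith
qed

theorem lemma3p1:
  fixes \<F> :: "('a::{field,finite}^'n) set set" and k t :: nat
  assumes "t > 0" and "k \<ge> t + 1" and "CARD('n) \<ge> 2 * k"
    and "\<F> \<subseteq> Gr k"
    and "almost_t_intersecting t \<F>"
    and "tau t \<F> \<ge> k + 1"
  shows "card \<F> \<le> (2 * k - 2 * t + 2) choose (k - t + 1)"
proof -
  have finF: "finite \<F>" by (rule finite)
  have FG: "vec.subspace X \<and> vec.dim X = k" if "X \<in> \<F>" for X
    using assms(4) that unfolding Gr_def by blast
  have nc: "\<exists>Y\<in>\<F>. vec.dim (X \<inter> Y) < t" if X: "X \<in> \<F>" for X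
  proof (rule ccontr)
    assume "\<not> (\<exists>Y\<in>\<F>. vec.dim (X \<inter> Y) < t)"
    then have "t_cover t \<F> X" unfolding t_cover_def using FG[OF X] by auto
    then have "tau t \<F> \<le> k" unfolding tau_def using FG[OF X] by (intro Least_le) blast
    then show False using assms(6) by simp
  qed
  define pt where "pt X = (SOME Y. Y \<in> \<F> \<and> vec.dim (X \<inter> Y) < t)" for X
  have pt: "pt X \<in> \<F> \<and> vec.dim (X \<inter> pt X) < t" if X: "X \<in> \<F>" for X
  proof -
    from nc[OF X] have "\<exists>Y. Y \<in> \<F> \<and> vec.dim (X \<inter> Y) < t" by blast
    then show ?thesis unfolding pt_def by (rule someI_ex)
  qed
  have big: "t \<le> vec.dim (X \<inter> Y)" if XY: "X \<in> \<F>" "Y \<in> \<F>" "Y \<noteq> pt X" for X Y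
  proof (rule ccontr)
    assume "\<not> t \<le> vec.dim (X \<inter> Y)"
    then have "Y \<in> {F'\<in>\<F>. vec.dim (X \<inter> F') < t}" "pt X \<in> {F'\<in>\<F>. vec.dim (X \<inter> F') < t}"
      using XY pt[OF XY(1)] by auto
    moreover have "card {F'\<in>\<F>. vec.dim (X \<inter> F') < t} \<le> Suc 0"
      using assms(5) XY(1) unfolding almost_t_intersecting_def by auto
    moreover have "finite {F'\<in>\<F>. vec.dim (X \<inter> F') < t}" using finF by simp
    ultimately have "Y = pt X" using card_le_Suc0_iff_eq by blast
    then show False using XY(3) by simp
  qed
  define P where "P X = vec.span (embv ` X)" for X :: "('a^'n) set"
  have "card \<F> \<le> (2 * (k-t+1)) choose (k-t+1)"
  proof (rule core_K[where P=P and pt=pt and I=\<F> and k=k and t=t])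
    show "infinite (UNIV :: 'a poly fract set)" by (rule inf_K)
    show "finite \<F>" by (rule finF)
    show "vec.subspace (P X)" if "X \<in> \<F>" for X unfolding P_def by (rule vec.subspace_span)
    show "vec.dim (P X) = k" if "X \<in> \<F>" for X unfolding P_def using FG[OF that] by (simp add: dim_embv)
    show "pt X \<in> \<F>" if "X \<in> \<F>" for X using pt[OF that] by blast
    show "vec.dim (P X \<inter> P (pt X)) < t" if X: "X \<in> \<F>" for X
      unfolding P_def using dim_embv_inter[of X "pt X"] FG[OF X] FG pt[OF X] by metis
    show "t \<le> vec.dim (P X \<inter> P Y)" if XY: "X \<in> \<F>" "Y \<in> \<F>" "Y \<noteq> pt X" for X Y
      unfolding P_def using dim_embv_inter[of X Y] FG[OF XY(1)] FG[OF XY(2)] big[OF XY] by metis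
    show "0 < t" by (rule assms(1))
    show "t \<le> k" using assms(2) by simp
    show "2 * k \<le> CARD('n)" by (rule assms(3))
  qed
  moreover have "2 * (k-t+1) = 2 * k - 2 * t + 2" using assms(2) by simp
  ultimately show ?thesis by simp
qed

end
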